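(* Let $A$ be a commutative ring, $\sigma$ a hereditary torsion theory on $A$-modules, and $M$ a totally $\sigma$-simple $A$-module with companion ideal $\mathfrak{h}\in\mathcal{L}(\sigma)$. Then: (1) $M\mathfrak{h}$ is not totally $\sigma$-torsion; hence $M\mathfrak{h}$ is the smallest submodule of $M$ that is not totally $\sigma$-torsion, and every submodule of $M$ that is not totally $\sigma$-torsion is itself totally $\sigma$-simple. (5) If $M'$ is a totally $\sigma$-simple $A$-module and $f:M\to M'$ is a surjective homomorphism, then $\ker f$ is totally $\sigma$-torsion.
   Context: $\mathcal{L}(\sigma)$ is the Gabriel filter of $\sigma$. A module $X$ is totally $\sigma$-torsion if $X\mathfrak{k}=0$ for some $\mathfrak{k}\in\mathcal{L}(\sigma)$. An $A$-module $M$ is totally $\sigma$-simple if $M$ is not totally $\sigma$-torsion and there exists $\mathfrak{h}\in\mathcal{L}(\sigma)$, called a companion ideal, such that $M\mathfrak{h}\subseteq H$ for every submodule $H\subseteq M$ that is not totally $\sigma$-torsion. *)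

theory Defs
  imports Complex_Main
begin

definition ring_ideal :: "'a::comm_ring_1 set \<Rightarrow> bool" where
  "ring_ideal I \<longleftrightarrow> 0 \<in> I \<and> (\<forall>x\<in>I. \<forall>y\<in>I. x + y \<in> I) \<and> (\<forall>r. \<forall>x\<in>I. r * x \<in> I)"

definition colon_ideal :: "'a::comm_ring_1 set \<Rightarrow> 'a \<Rightarrow> 'a set" where
  "colon_ideal J a = {x. x * a \<in> J}"

text \<open>Gabriel filter (Stenstrom): a nonempty set of ideals satisfying T1--T3.
  The hereditary torsion theory sigma is represented by its Gabriel filter L(sigma).\<close>
definition gabriel_filter :: "'a::comm_ring_1 set set \<Rightarrow> bool" where
  "gabriel_filter F \<longleftrightarrow>
     (\<forall>I\<in>F. ring_ideal I) \<and> UNIV \<in> F \<and>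
     (\<forall>I\<in>F. \<forall>J. ring_ideal J \<and> I \<subseteq> J \<longrightarrow> J \<in> F) \<and>
     (\<forall>I\<in>F. \<forall>a. colon_ideal I a \<in> F) \<and>
     (\<forall>I\<in>F. \<forall>J. ring_ideal J \<and> (\<forall>a\<in>I. colon_ideal J a \<in> F) \<longrightarrow> J \<in> F)"

definition tot_torsion :: "'a::comm_ring_1 set set \<Rightarrow> ('a \<Rightarrow> 'b::ab_group_add \<Rightarrow> 'b) \<Rightarrow> 'b set \<Rightarrow> bool" where
  "tot_torsion F scale X \<longleftrightarrow> (\<exists>k\<in>F. \<forall>x\<in>X. \<forall>a\<in>k. scale a x = 0)"

definition mod_ideal_prod :: "('a::comm_ring_1 \<Rightarrow> 'b::ab_group_add \<Rightarrow> 'b) \<Rightarrow> 'b set \<Rightarrow> 'a set \<Rightarrow> 'b set" where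
  "mod_ideal_prod scale X I = module.span scale {scale a x | a x. a \<in> I \<and> x \<in> X}"

text \<open>h is a companion ideal of the totally sigma-simple module M (M a submodule of the ambient module).\<close>
definition tot_simple_companion :: "'a::comm_ring_1 set set \<Rightarrow> ('a \<Rightarrow> 'b::ab_group_add \<Rightarrow> 'b) \<Rightarrow> 'b set \<Rightarrow> 'a set \<Rightarrow> bool" where
  "tot_simple_companion F scale M h \<longleftrightarrow>
     \<not> tot_torsion F scale M \<and> h \<in> F \<and>
     (\<forall>H. module.subspace scale H \<and> H \<subseteq> M \<and> \<not> tot_torsion F scale H \<longrightarrow> mod_ideal_prod scale M h \<subseteq> H)"

definition tot_simple :: "'a::comm_ring_1 set set \<Rightarrow> ('a \<Rightarrow> 'b::ab_group_add \<Rightarrow> 'b) \<Rightarrow> 'b set \<Rightarrow> bool" where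
  "tot_simple F scale M \<longleftrightarrow> (\<exists>h. tot_simple_companion F scale M h)"

definition module_hom_on :: "('a \<Rightarrow> 'b::ab_group_add \<Rightarrow> 'b) \<Rightarrow> ('a \<Rightarrow> 'c::ab_group_add \<Rightarrow> 'c) \<Rightarrow> 'b set \<Rightarrow> 'c set \<Rightarrow> ('b \<Rightarrow> 'c) \<Rightarrow> bool" where
  "module_hom_on s1 s2 M M' f \<longleftrightarrow> f ` M \<subseteq> M' \<and>
     (\<forall>x\<in>M. \<forall>y\<in>M. f (x + y) = f x + f y) \<and> (\<forall>a. \<forall>x\<in>M. f (s1 a x) = s2 a (f x))"

end

theory Submission
  imports Defs
begin

lemma ann_in_F:
  fixes F :: "'a::comm_ring_1 set set" and scale :: "'a \<Rightarrow> 'b::ab_group_add \<Rightarrow> 'b"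
  assumes gf: "gabriel_filter F" and m: "module scale" and hF: "h \<in> F" and kF: "k \<in> F"
    and ann: "\<forall>x\<in>mod_ideal_prod scale M h. \<forall>a\<in>k. scale a x = 0"
  shows "tot_torsion F scale M"
proof -
  interpret module scale by (rule m)
  have up: "\<And>I J. I \<in> F \<Longrightarrow> ring_ideal J \<Longrightarrow> I \<subseteq> J \<Longrightarrow> J \<in> F"
    using gf unfolding gabriel_filter_def by blast
  have t3: "\<And>I J. I \<in> F \<Longrightarrow> ring_ideal J \<Longrightarrow> (\<forall>a\<in>I. colon_ideal J a \<in> F) \<Longrightarrow> J \<in> F"
    using gf unfolding gabriel_filter_def by blast
  define J where "J = {r. \<forall>x\<in>M. scale r x = 0}"
  have idJ: "ring_ideal J" unfolding ring_ideal_def J_def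
  proof (intro conjI ballI allI)
    show "0 \<in> {r. \<forall>x\<in>M. scale r x = 0}" by simp
  next
    fix x y assume "x \<in> {r. \<forall>x\<in>M. scale r x = 0}" "y \<in> {r. \<forall>x\<in>M. scale r x = 0}"
    thus "x + y \<in> {r. \<forall>x\<in>M. scale r x = 0}" by (simp add: scale_left_distrib)
  next
    fix r x assume "x \<in> {r. \<forall>x\<in>M. scale r x = 0}"
    hence "\<forall>m\<in>M. scale r (scale x m) = 0" by simp
    thus "r * x \<in> {r. \<forall>x\<in>M. scale r x = 0}" by simp
  qed
  have "\<forall>a\<in>h. colon_ideal J a \<in> F"
  proof
    fix a assume a: "a \<in> h"
    have id: "ring_ideal (colon_ideal J a)" using idJ unfolding ring_ideal_def colon_ideal_def
      by (simp add: distrib_right mult.assoc)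
    have "k \<subseteq> colon_ideal J a"
    proof
      fix x assume x: "x \<in> k"
      { fix m assume mm: "m \<in> M"
        have "scale a m \<in> mod_ideal_prod scale M h" unfolding mod_ideal_prod_def
          by (rule span_base) (use a mm in blast)
        hence "scale x (scale a m) = 0" using ann x by blast
        hence "scale (x*a) m = 0" by simp }
      thus "x \<in> colon_ideal J a" unfolding colon_ideal_def J_def by blast
    qed
    thus "colon_ideal J a \<in> F" by (rule up[OF kF id])
  qed
  hence "J \<in> F" by (rule t3[OF hF idJ])
  show ?thesis unfolding tot_torsion_def
  proof (rule bexI[of _ J])
    show "\<forall>x\<in>M. \<forall>a\<in>J. scale a x = 0" unfolding J_def by simp
  qed fact
qed

theorem mainTheorem19:
  fixes F :: "'a::comm_ring_1 set set"
    and scale :: "'a \<Rightarrow> 'b::ab_group_add \<Rightarrow> 'b" and M :: "'b set" and h :: "'a set"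
    and scale' :: "'a \<Rightarrow> 'c::ab_group_add \<Rightarrow> 'c" and M' :: "'c set" and f :: "'b \<Rightarrow> 'c"
  assumes "gabriel_filter F"
    and "module scale" and "module.subspace scale M"
    and "tot_simple_companion F scale M h"
  shows "\<not> tot_torsion F scale (mod_ideal_prod scale M h)
    \<and> (module.subspace scale (mod_ideal_prod scale M h) \<and> mod_ideal_prod scale M h \<subseteq> M
       \<and> (\<forall>H. module.subspace scale H \<and> H \<subseteq> M \<and> \<not> tot_torsion F scale H
              \<longrightarrow> mod_ideal_prod scale M h \<subseteq> H))
    \<and> (\<forall>H. module.subspace scale H \<and> H \<subseteq> M \<and> \<not> tot_torsion F scale H
              \<longrightarrow> tot_simple F scale H)
    \<and> (module scale' \<and> module.subspace scale' M' \<and> tot_simple F scale' M'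
        \<and> module_hom_on scale scale' M M' f \<and> f ` M = M'
        \<longrightarrow> tot_torsion F scale {x \<in> M. f x = 0})"
proof -
  interpret module scale by (rule assms(2))
  have nt: "\<not> tot_torsion F scale M" and hF: "h \<in> F"
    and minl: "\<forall>H. subspace H \<and> H \<subseteq> M \<and> \<not> tot_torsion F scale H \<longrightarrow> mod_ideal_prod scale M h \<subseteq> H"
    using assms(4) unfolding tot_simple_companion_def by auto
  have P1: "\<not> tot_torsion F scale (mod_ideal_prod scale M h)"
  proof
    assume "tot_torsion F scale (mod_ideal_prod scale M h)"
    then obtain k where "k \<in> F" "\<forall>x\<in>mod_ideal_prod scale M h. \<forall>a\<in>k. scale a x = 0"
      unfolding tot_torsion_def by blast
    from ann_in_F[OF assms(1,2) hF this] nt show False by simp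
  qed
  have sub: "mod_ideal_prod scale M h \<subseteq> M" unfolding mod_ideal_prod_def
    apply (rule span_minimal) using assms(3) unfolding subspace_def by blast+
  have P3: "\<forall>H. subspace H \<and> H \<subseteq> M \<and> \<not> tot_torsion F scale H \<longrightarrow> tot_simple F scale H"
  proof (intro allI impI)
    fix H assume H: "subspace H \<and> H \<subseteq> M \<and> \<not> tot_torsion F scale H"
    have "tot_simple_companion F scale H h" unfolding tot_simple_companion_def
    proof (intro conjI allI impI)
      show "\<not> tot_torsion F scale H" using H by blast
      show "h \<in> F" by (rule hF)
      fix K assume K: "subspace K \<and> K \<subseteq> H \<and> \<not> tot_torsion F scale K"
      have "mod_ideal_prod scale H h \<subseteq> mod_ideal_prod scale M h" unfolding mod_ideal_prod_def
        by (rule span_mono) (use H in blast)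
      also have "\<dots> \<subseteq> K" using minl K H by blast
      finally show "mod_ideal_prod scale H h \<subseteq> K" .
    qed
    thus "tot_simple F scale H" unfolding tot_simple_def by blast
  qed
  have P5: "module scale' \<and> module.subspace scale' M' \<and> tot_simple F scale' M'
        \<and> module_hom_on scale scale' M M' f \<and> f ` M = M'
        \<longrightarrow> tot_torsion F scale {x \<in> M. f x = 0}"
  proof
    assume A: "module scale' \<and> module.subspace scale' M' \<and> tot_simple F scale' M'
        \<and> module_hom_on scale scale' M M' f \<and> f ` M = M'"
    then interpret m2: module scale' by blast
    have add: "\<forall>x\<in>M. \<forall>y\<in>M. f (x + y) = f x + f y" and sc: "\<forall>a. \<forall>x\<in>M. f (scale a x) = scale' a (f x)"
      using A unfolding module_hom_on_def by auto
    have ntM': "\<not> tot_torsion F scale' M'" using A unfolding tot_simple_def tot_simple_companion_def by blast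
    show "tot_torsion F scale {x \<in> M. f x = 0}"
    proof (rule ccontr)
      assume nk: "\<not> tot_torsion F scale {x \<in> M. f x = 0}"
      have M0: "0 \<in> M" using assms(3) unfolding subspace_def by blast
      have "f 0 = f 0 + f 0" using add M0 by (metis add.right_neutral)
      hence f0: "f 0 = 0" by simp
      have "subspace {x \<in> M. f x = 0}" using assms(3) unfolding subspace_def
        using add sc f0 by (simp add: m2.scale_zero_right)
      hence "mod_ideal_prod scale M h \<subseteq> {x \<in> M. f x = 0}" using minl nk by blast
      hence "\<forall>y\<in>M'. \<forall>a\<in>h. scale' a y = 0"
      proof (intro ballI)
        fix y a assume S: "mod_ideal_prod scale M h \<subseteq> {x \<in> M. f x = 0}" and y: "y \<in> M'" and a: "a \<in> h"
        obtain m where m: "m \<in> M" "y = f m" using A y by blast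
        have "scale a m \<in> mod_ideal_prod scale M h" unfolding mod_ideal_prod_def
          by (rule span_base) (use a m in blast)
        hence "f (scale a m) = 0" using S by blast
        thus "scale' a y = 0" using sc m by simp
      qed
      thus False using ntM' hF unfolding tot_torsion_def by blast
    qed
  qed
  have "subspace (mod_ideal_prod scale M h)" unfolding mod_ideal_prod_def by (rule subspace_span)
  note S = this
  show ?thesis
    apply (rule conjI, rule P1)
    apply (rule conjI, rule conjI, rule S, rule conjI, rule sub, rule minl)
    apply (rule conjI, rule P3)
    by (rule P5)
qed

end
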